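(* Let $\lambda \geq 1$, $\mu \geq 0$, $\delta \geq 0$, $t\in\left(\tfrac12,1\right)$ and $\xi=\frac{2\lambda+\mu}{2\lambda+1}$. Let $f(z)=z+\sum_{n=2}^{\infty}a_n z^n$ belong to the class $\mathscr{B}_{\Sigma}^{\mu}(\lambda,\delta,t)$ defined below. Then \[ |a_{2}|\leq \frac{2t\sqrt{2t}}{\sqrt{\left|(\lambda+\mu+2\xi\delta)^{2}-2\left[2(\lambda+\mu +2\xi\delta)^{2}- (2\lambda + \mu)(\mu+1)-12 \xi\delta\right]t^{2}\right|}} \] and \[ |a_{3}|\leq \frac{4t^{2}}{(\lambda + \mu +2\xi\delta )^{2}}+\frac{2t}{2\lambda+\mu +6\xi\delta}. \]
   Context: Let $\mathbb{U}=\{z\in\mathbb{C}:|z|<1\}$ and let $\mathcal{A}$ be the class of analytic functions $f$ on $\mathbb{U}$ with $f(0)=0$, $f'(0)=1$, i.e. $f(z)=z+\sum_{n\ge2}a_nz^n$. A function $f\in\mathcal{A}$ is bi-univalent if $f$ is univalent on $\mathbb{U}$ and its inverse $g=f^{-1}$ (defined near $0$, with $f^{-1}(f(z))=z$, and $g(w)=w-a_2w^2+(2a_2^2-a_3)w^3-\cdots$) extends to a univalent function on $\mathbb{U}$; $\Sigma$ denotes the class of such $f$. For analytic $F,G$ on $\mathbb{U}$, $F\prec G$ (subordination) means there is an analytic $\omega$ on $\mathbb{U}$ with $\omega(0)=0$, $|\omega(z)|<1$ and $F=G\circ\omega$. The Chebyshev polynomials of the second kind are $U_0(t)=1$, $U_1(t)=2t$,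 $U_{n+1}(t)=2tU_n(t)-U_{n-1}(t)$, with generating function $H(z,t)=\frac{1}{1-2tz+z^2}=\sum_{n\ge0}U_n(t)z^n$. For $\lambda\ge1,\mu\ge0,\delta\ge0$, $t\in(\frac12,1)$ and $\xi=\frac{2\lambda+\mu}{2\lambda+1}$, the class $\mathscr{B}_{\Sigma}^{\mu}(\lambda,\delta,t)$ consists of all $f\in\Sigma$ such that, with $g=f^{-1}$, \[ (1-\lambda)\left(\tfrac{f(z)}{z}\right)^{\mu}+\lambda f'(z)\left(\tfrac{f(z)}{z}\right)^{\mu-1}+\xi\delta z f''(z)\prec H(z,t) \] and \[ (1-\lambda)\left(\tfrac{g(w)}{w}\right)^{\mu}+\lambda g'(w)\left(\tfrac{g(w)}{w}\right)^{\mu-1}+\xi\delta w g''(w)\prec H(w,t), \] where powers are taken with the principal branch equal to $1$ at the origin. *)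

theory Defs
  imports "HOL-Analysis.Analysis"
begin

abbreviation unit_disc :: "complex set" where
  "unit_disc \<equiv> ball 0 1"

definition normalized_analytic :: "(complex \<Rightarrow> complex) \<Rightarrow> bool" where
  "normalized_analytic f \<longleftrightarrow> f holomorphic_on unit_disc \<and> f 0 = 0 \<and> deriv f 0 = 1"

text \<open>Bi-univalent class Sigma: f in A univalent on the disc, and the local inverse
  of f at 0 extends to a univalent analytic function g on the disc.  "g extends
  the inverse" is expressed by: g equals the inverse of f on a neighbourhood of 0.\<close>
definition bi_univalent :: "(complex \<Rightarrow> complex) \<Rightarrow> bool" where
  "bi_univalent f \<longleftrightarrow> normalized_analytic f \<and> inj_on f unit_disc \<and>
     (\<exists>g. g holomorphic_on unit_disc \<and> inj_on g unit_disc \<and>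
          (\<exists>r>0. \<forall>w\<in>ball 0 r. g w \<in> unit_disc \<and> f (g w) = w))"

text \<open>The (unique) analytic continuation of the inverse, used to name g = f^{-1}.\<close>
definition is_bi_inverse :: "(complex \<Rightarrow> complex) \<Rightarrow> (complex \<Rightarrow> complex) \<Rightarrow> bool" where
  "is_bi_inverse f g \<longleftrightarrow> g holomorphic_on unit_disc \<and> inj_on g unit_disc \<and>
          (\<exists>r>0. \<forall>w\<in>ball 0 r. g w \<in> unit_disc \<and> f (g w) = w)"

definition subordinate :: "(complex \<Rightarrow> complex) \<Rightarrow> (complex \<Rightarrow> complex) \<Rightarrow> bool" where
  "subordinate F G \<longleftrightarrow>
     (\<exists>\<omega>. \<omega> holomorphic_on unit_disc \<and> \<omega> 0 = 0 \<and>
          (\<forall>z\<in>unit_disc. norm (\<omega> z) < 1) \<and>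
          (\<forall>z\<in>unit_disc. F z = G (\<omega> z)))"

text \<open>Generating function of Chebyshev polynomials of the second kind.\<close>
definition cheb_H :: "real \<Rightarrow> complex \<Rightarrow> complex" where
  "cheb_H t z = 1 / (1 - 2 * complex_of_real t * z + z ^ 2)"

definition quot0 :: "(complex \<Rightarrow> complex) \<Rightarrow> complex \<Rightarrow> complex" where
  "quot0 f z = (if z = 0 then deriv f 0 else f z / z)"

text \<open>The operator
  (1-\<lambda>)(f(z)/z)^\<mu> + \<lambda> f'(z) (f(z)/z)^(\<mu>-1) + \<xi>\<delta> z f''(z),
  where the powers are exp(\<mu> L z), exp((\<mu>-1) L z) for the branch L of log(f(z)/z)
  that is analytic on the disc with L(0) = 0.\<close>
definition B_operator :: "real \<Rightarrow> real \<Rightarrow> real \<Rightarrow> (complex \<Rightarrow> complex) \<Rightarrow>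
    (complex \<Rightarrow> complex) \<Rightarrow> complex \<Rightarrow> complex" where
  "B_operator lam \<mu> \<delta> f L z =
     (1 - complex_of_real lam) * exp (complex_of_real \<mu> * L z)
     + complex_of_real lam * deriv f z * exp (complex_of_real (\<mu> - 1) * L z)
     + complex_of_real ((2*lam + \<mu>) / (2*lam + 1) * \<delta>) * z * deriv (deriv f) z"

text \<open>The subordination condition for a function h \<in> {f, g}: with L the analytic
  logarithm of h(z)/z normalized by L(0) = 0 (it exists and is unique).\<close>
definition B_condition :: "real \<Rightarrow> real \<Rightarrow> real \<Rightarrow> real \<Rightarrow> (complex \<Rightarrow> complex) \<Rightarrow> bool" where
  "B_condition lam \<mu> \<delta> t h \<longleftrightarrow>
     (\<exists>L. L holomorphic_on unit_disc \<and> L 0 = 0 \<and>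
          (\<forall>z\<in>unit_disc. exp (L z) = quot0 h z) \<and>
          subordinate (B_operator lam \<mu> \<delta> h L) (cheb_H t))"

definition B_class :: "real \<Rightarrow> real \<Rightarrow> real \<Rightarrow> real \<Rightarrow> (complex \<Rightarrow> complex) set" where
  "B_class \<mu> lam \<delta> t =
     {f. bi_univalent f \<and> B_condition lam \<mu> \<delta> t f \<and>
         (\<forall>g. is_bi_inverse f g \<longrightarrow> B_condition lam \<mu> \<delta> t g)}"

definition taylor_coeff :: "(complex \<Rightarrow> complex) \<Rightarrow> nat \<Rightarrow> complex" where
  "taylor_coeff f n = (deriv ^^ n) f 0 / of_nat (fact n)"

end

theory Submission imports Defs "HOL-Complex_Analysis.Complex_Analysis" begin

lemma deriv_unique_on:
  fixes \<phi> \<psi> :: "complex \<Rightarrow> complex"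
  assumes "open S" "x \<in> S" "\<forall>z\<in>S. \<phi> z = \<psi> z"
    "(\<phi> has_field_derivative a) (at x)" "(\<psi> has_field_derivative b) (at x)"
  shows "a = b"
proof -
  have ev: "eventually (\<lambda>z. \<phi> z = \<psi> z) (nhds x)"
    using assms(1,2,3) eventually_nhds by blast
  have "a = deriv \<phi> x" using assms(4) by (simp add: DERIV_imp_deriv)
  also have "\<dots> = deriv \<psi> x" by (rule deriv_cong_ev[OF ev refl])
  also have "\<dots> = b" using assms(5) by (simp add: DERIV_imp_deriv)
  finally show ?thesis .
qed

lemma schwarz_coeffs:
  assumes hol: "\<omega> holomorphic_on unit_disc" and w0: "\<omega> 0 = 0"
    and wb: "\<forall>z\<in>unit_disc. norm (\<omega> z) < 1"
  shows "norm (deriv \<omega> 0) \<le> 1" "norm (deriv (deriv \<omega>) 0) \<le> 2"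
proof -
  have ci: "norm ((deriv ^^ n) \<omega> 0) \<le> fact n / r^n" if r: "0 < r" "r < 1" for r n
  proof -
    have "norm ((deriv ^^ n) \<omega> 0) \<le> fact n * 1 / r^n"
    proof (rule Cauchy_inequality)
      show "\<omega> holomorphic_on ball 0 r" using hol r by (auto elim: holomorphic_on_subset)
      have "cball 0 r \<subseteq> unit_disc" using r by auto
      then show "continuous_on (cball 0 r) \<omega>"
        using holomorphic_on_imp_continuous_on[OF hol] continuous_on_subset by blast
      show "0 < r" by fact
      show "norm (\<omega> x) \<le> 1" if "norm (0 - x) = r" for x
        using wb that r by (auto simp: less_imp_le)
    qed
    then show ?thesis by simp
  qed
  have lim: "x \<le> c" if "\<And>r. 0 < r \<Longrightarrow> r < 1 \<Longrightarrow> x \<le> c / r^n" "c > 0" "n > 0" for x c :: real and n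
  proof (rule ccontr)
    assume "\<not> x \<le> c"
    then have xc: "x > c" by simp
    define q where "q = c/x"
    have cx: "q < 1" "0 < q" using xc \<open>c>0\<close> by (auto simp: q_def)
    define s where "s = (1 + q)/2"
    have s: "q < s" "s < 1" "0 < s" using cx unfolding s_def by auto
    define r where "r = root n s"
    have r: "0 < r" "r < 1" "r^n = s" using s \<open>n>0\<close> unfolding r_def
      by (auto simp: real_root_less_iff)
    have "x \<le> c / s" using that(1)[OF r(1,2)] r(3) by simp
    moreover have "c / s < x" using s xc \<open>c>0\<close> unfolding q_def by (simp add: divide_less_eq mult.commute pos_divide_less_eq)
    ultimately show False by simp
  qed
  have "norm ((deriv ^^ 1) \<omega> 0) \<le> fact 1"
    by (rule lim[where n=1]) (use ci[where n=1] in auto)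
  then show "norm (deriv \<omega> 0) \<le> 1" by simp
  have "norm ((deriv ^^ 2) \<omega> 0) \<le> fact 2"
    by (rule lim[where n=2]) (use ci[where n=2] in auto)
  then show "norm (deriv (deriv \<omega>) 0) \<le> 2" by (simp add: numeral_2_eq_2)
qed

lemma cheb_den_nz:
  assumes "1/2 < t" "t < 1" "norm w < 1"
  shows "1 - 2 * complex_of_real t * w + w^2 \<noteq> 0"
proof
  assume eq: "1 - 2 * complex_of_real t * w + w^2 = 0"
  obtain x y where w: "w = Complex x y" by (cases w)
  have re: "1 - 2*t*x + x^2 - y^2 = 0" and im: "- 2*t*y + 2*x*y = 0"
    using eq unfolding w by (auto simp: complex_eq_iff power2_eq_square)
  have n: "x^2 + y^2 < 1" using assms(3) unfolding w
    by (simp add: cmod_def)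
  from im have "y = 0 \<or> x = t" by (auto simp: algebra_simps)
  then show False
  proof
    assume "y = 0"
    then have "(x - t)^2 + (1 - t^2) = 0" using re by (simp add: power2_eq_square algebra_simps)
    moreover have "1 - t^2 > 0" using assms(1,2) mult_strict_mono[of t 1 t 1] by (simp add: power2_eq_square)
    ultimately show False by (smt (verit) zero_le_power2)
  next
    assume "x = t" then show False using re n by (simp add: power2_eq_square algebra_simps)
  qed
qed

lemma cheb_H_deriv:
  assumes "1 - 2 * complex_of_real t * w + w^2 \<noteq> 0"
  shows "(cheb_H t has_field_derivative (2*complex_of_real t - 2*w) * cheb_H t w ^ 2) (at w)"
proof -
  have "((\<lambda>w. 1 / (1 - 2 * complex_of_real t * w + w^2)) has_field_derivative
      (2*complex_of_real t - 2*w) * (1 / (1 - 2 * complex_of_real t * w + w^2)) ^ 2) (at w)"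
    using assms
    by (auto intro!: derivative_eq_intros simp: field_simps power2_eq_square)
  then show ?thesis unfolding cheb_H_def[abs_def] by simp
qed



lemma key:
  fixes h :: "complex \<Rightarrow> complex"
  assumes hol: "h holomorphic_on unit_disc" and h0: "h 0 = 0" and h10: "deriv h 0 = 1"
    and cond: "B_condition lam \<mu> \<delta> t h" and t: "1/2 < t" "t < 1"
  defines "k \<equiv> complex_of_real ((2*lam + \<mu>) / (2*lam + 1) * \<delta>)"
  shows "\<exists>c1 c2. norm c1 \<le> 1 \<and> norm c2 \<le> 1 \<and>
    (of_real lam + of_real \<mu> + 2*k) * (deriv (deriv h) 0 / 2) = 2 * of_real t * c1 \<and>
    (2* of_real lam + of_real \<mu> + 6*k) * ((deriv ^^ 3) h 0 / 6)
      + ((2* of_real lam + of_real \<mu>) * (of_real \<mu> - 1) / 2) * (deriv (deriv h) 0 / 2)^2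
      = 2 * of_real t * c2 + (4 * of_real t ^ 2 - 1) * c1^2"
proof -
  let ?D = "unit_disc"
  obtain L where Lhol: "L holomorphic_on ?D" and L0: "L 0 = 0"
    and Lq: "\<forall>z\<in>?D. exp (L z) = quot0 h z"
    and sub: "subordinate (B_operator lam \<mu> \<delta> h L) (cheb_H t)"
    using cond unfolding B_condition_def by blast
  obtain \<omega> where whol: "\<omega> holomorphic_on ?D" and w0: "\<omega> 0 = 0"
    and wb: "\<forall>z\<in>?D. norm (\<omega> z) < 1"
    and Fw: "\<forall>z\<in>?D. B_operator lam \<mu> \<delta> h L z = cheb_H t (\<omega> z)"
    using sub unfolding subordinate_def by blast
  define h1 where "h1 = deriv h"
  define h2 where "h2 = deriv h1"
  define h3 where "h3 = deriv h2"
  define h4 where "h4 = deriv h3"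
  define L1 where "L1 = deriv L"
  define L2 where "L2 = deriv L1"
  define L3 where "L3 = deriv L2"
  define w1 where "w1 = deriv \<omega>"
  define w2 where "w2 = deriv w1"
  define w3 where "w3 = deriv w2"
  have o: "open ?D" by simp
  have hh1: "h1 holomorphic_on ?D" unfolding h1_def by (intro holomorphic_deriv hol o)
  have hh2: "h2 holomorphic_on ?D" unfolding h2_def by (intro holomorphic_deriv hh1 o)
  have hh3: "h3 holomorphic_on ?D" unfolding h3_def by (intro holomorphic_deriv hh2 o)
  have hL1: "L1 holomorphic_on ?D" unfolding L1_def by (intro holomorphic_deriv Lhol o)
  have hL2: "L2 holomorphic_on ?D" unfolding L2_def by (intro holomorphic_deriv hL1 o)
  have hw1: "w1 holomorphic_on ?D" unfolding w1_def by (intro holomorphic_deriv whol o)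
  have hw2: "w2 holomorphic_on ?D" unfolding w2_def by (intro holomorphic_deriv hw1 o)
  have dh: "(h has_field_derivative h1 z) (at z)" if "z \<in> ?D" for z
    unfolding h1_def by (rule holomorphic_derivI[OF hol o that])
  have dh1: "(h1 has_field_derivative h2 z) (at z)" if "z \<in> ?D" for z
    unfolding h2_def by (rule holomorphic_derivI[OF hh1 o that])
  have dh2: "(h2 has_field_derivative h3 z) (at z)" if "z \<in> ?D" for z
    unfolding h3_def by (rule holomorphic_derivI[OF hh2 o that])
  have dh3: "(h3 has_field_derivative h4 z) (at z)" if "z \<in> ?D" for z
    unfolding h4_def by (rule holomorphic_derivI[OF hh3 o that])
  have dL: "(L has_field_derivative L1 z) (at z)" if "z \<in> ?D" for z
    unfolding L1_def by (rule holomorphic_derivI[OF Lhol o that])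
  have dL1: "(L1 has_field_derivative L2 z) (at z)" if "z \<in> ?D" for z
    unfolding L2_def by (rule holomorphic_derivI[OF hL1 o that])
  have dL2: "(L2 has_field_derivative L3 z) (at z)" if "z \<in> ?D" for z
    unfolding L3_def by (rule holomorphic_derivI[OF hL2 o that])
  have dw: "(\<omega> has_field_derivative w1 z) (at z)" if "z \<in> ?D" for z
    unfolding w1_def by (rule holomorphic_derivI[OF whol o that])
  have dw1: "(w1 has_field_derivative w2 z) (at z)" if "z \<in> ?D" for z
    unfolding w2_def by (rule holomorphic_derivI[OF hw1 o that])
  have dw2: "(w2 has_field_derivative w3 z) (at z)" if "z \<in> ?D" for z
    unfolding w3_def by (rule holomorphic_derivI[OF hw2 o that])
  have z0: "(0::complex) \<in> ?D" by simp

  have hz: "\<forall>z\<in>?D. h z = z * exp (L z)"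
  proof
    fix z assume z: "z \<in> ?D"
    show "h z = z * exp (L z)"
    proof (cases "z = 0")
      case True then show ?thesis using h0 by simp
    next
      case False then show ?thesis using Lq z by (simp add: quot0_def)
    qed
  qed
  define P1 where "P1 = (\<lambda>z. exp (L z) + z * (L1 z * exp (L z)))"
  have eP1: "\<forall>z\<in>?D. h1 z = P1 z"
  proof
    fix z assume z: "z \<in> ?D"
    have "((\<lambda>z. z * exp (L z)) has_field_derivative P1 z) (at z)"
      unfolding P1_def by (auto intro!: derivative_eq_intros dL z)
    then show "h1 z = P1 z" using deriv_unique_on[OF o z hz dh[OF z]] by simp
  qed
  define P2 where "P2 = (\<lambda>z. L1 z * exp (L z) + (L1 z * exp (L z) + z * (L2 z * exp (L z) + L1 z * (L1 z * exp (L z)))))"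
  have eP2: "\<forall>z\<in>?D. h2 z = P2 z"
  proof
    fix z assume z: "z \<in> ?D"
    have "(P1 has_field_derivative P2 z) (at z)"
      unfolding P1_def P2_def by (auto intro!: derivative_eq_intros dL dL1 z simp: algebra_simps)
    then show "h2 z = P2 z" using deriv_unique_on[OF o z eP1 dh1[OF z]] by simp
  qed
  have R2: "h2 0 = 2 * L1 0" using eP2 z0 L0 unfolding P2_def by simp
  have R3: "h3 0 = 3 * (L2 0 + L1 0 ^ 2)"
  proof -
    have "(P2 has_field_derivative 3 * (L2 0 + L1 0 ^ 2)) (at 0)"
      unfolding P2_def by (auto intro!: derivative_eq_intros dL dL1 dL2 z0 simp: L0 algebra_simps power2_eq_square)
    then show ?thesis using deriv_unique_on[OF o z0 eP2 dh2[OF z0]] by simp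
  qed
  have h1_0: "h1 0 = 1" using h10 h1_def by simp
  define F where "F = B_operator lam \<mu> \<delta> h L"
  have Fe: "F z = (1 - complex_of_real lam) * exp (complex_of_real \<mu> * L z)
     + complex_of_real lam * h1 z * exp (complex_of_real (\<mu> - 1) * L z) + k * z * h2 z" for z
    unfolding F_def B_operator_def h1_def h2_def k_def by simp
  define Fd where "Fd = (\<lambda>z. (1 - complex_of_real lam) * (complex_of_real \<mu> * L1 z * exp (complex_of_real \<mu> * L z))
     + complex_of_real lam * (h2 z * exp (complex_of_real (\<mu> - 1) * L z)
        + h1 z * (complex_of_real (\<mu> - 1) * L1 z * exp (complex_of_real (\<mu> - 1) * L z)))
     + k * (h2 z + z * h3 z))"
  have dF: "(F has_field_derivative Fd z) (at z)" if z: "z \<in> ?D" for z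
    unfolding Fe[abs_def] Fd_def
    by (auto intro!: derivative_eq_intros dL dh1 dh2 z simp: algebra_simps)
  define VF where "VF = (1 - complex_of_real lam) * complex_of_real \<mu> * (L2 0 + complex_of_real \<mu> * L1 0 ^ 2)
     + complex_of_real lam * (h3 0 + 2 * complex_of_real (\<mu> - 1) * h2 0 * L1 0
        + complex_of_real (\<mu> - 1) * (L2 0 + complex_of_real (\<mu> - 1) * L1 0 ^ 2))
     + 2 * k * h3 0"
  have dFd: "(Fd has_field_derivative VF) (at 0)"
    unfolding Fd_def VF_def
    by (auto intro!: derivative_eq_intros dL dL1 dh1 dh2 dh3 z0 simp: L0 h1_0 algebra_simps power2_eq_square)
  define Hd where "Hd = (\<lambda>w. (2 * complex_of_real t - 2 * w) * cheb_H t w ^ 2)"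
  have den: "1 - 2 * complex_of_real t * \<omega> z + \<omega> z ^ 2 \<noteq> 0" if "z \<in> ?D" for z
    using cheb_den_nz[OF t] wb that by blast
  have dG: "((\<lambda>z. cheb_H t (\<omega> z)) has_field_derivative Hd (\<omega> z) * w1 z) (at z)" if z: "z \<in> ?D" for z
    unfolding Hd_def by (rule DERIV_chain2[OF cheb_H_deriv[OF den[OF z]] dw[OF z]])
  have E1: "\<forall>z\<in>?D. Fd z = Hd (\<omega> z) * w1 z"
  proof
    fix z assume z: "z \<in> ?D"
    show "Fd z = Hd (\<omega> z) * w1 z"
      by (rule deriv_unique_on[OF o z _ dF[OF z] dG[OF z]]) (use Fw F_def in auto)
  qed
  have H0: "cheb_H t 0 = 1" by (simp add: cheb_H_def)
  have dH0: "(cheb_H t has_field_derivative 2 * complex_of_real t) (at 0)"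
    using cheb_H_deriv[of t 0] by (simp add: H0)
  have dHd0: "(Hd has_field_derivative (8 * complex_of_real t ^ 2 - 2)) (at 0)"
    unfolding Hd_def
    by (auto intro!: derivative_eq_intros dH0 simp: H0 algebra_simps power2_eq_square)
  have dRHS: "((\<lambda>z. Hd (\<omega> z) * w1 z) has_field_derivative
        (8 * complex_of_real t ^ 2 - 2) * w1 0 * w1 0 + Hd 0 * w2 0) (at 0)"
  proof -
    have "((\<lambda>z. Hd (\<omega> z)) has_field_derivative (8 * complex_of_real t ^ 2 - 2) * w1 0) (at 0)"
    proof -
      have "(Hd has_field_derivative (8 * complex_of_real t ^ 2 - 2)) (at (\<omega> 0))" using dHd0 w0 by simp
      from DERIV_chain2[OF this dw[OF z0]] show ?thesis .
    qed
    then show ?thesis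
      by (auto intro!: derivative_eq_intros dw1 z0 simp: w0)
  qed
  have Hd0: "Hd 0 = 2 * complex_of_real t" by (simp add: Hd_def H0)
  have E2: "VF = (8 * complex_of_real t ^ 2 - 2) * w1 0 * w1 0 + 2 * complex_of_real t * w2 0"
    using deriv_unique_on[OF o z0 E1 dFd dRHS] Hd0 by simp
  have E1': "Fd 0 = 2 * complex_of_real t * w1 0" using E1 z0 w0 Hd0 by simp
  have c1: "norm (w1 0) \<le> 1" and c2: "norm (w2 0) \<le> 2"
    using schwarz_coeffs[OF whol w0 wb] unfolding w1_def w2_def by auto
  show ?thesis
  proof (intro exI conjI)
    show "norm (w1 0) \<le> 1" by fact
    show "norm (w2 0 / 2) \<le> 1" using c2 by (simp add: norm_divide)
    show "(of_real lam + of_real \<mu> + 2*k) * (deriv (deriv h) 0 / 2) = 2 * of_real t * w1 0"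
      using E1' R2 h1_0 L0 unfolding Fd_def h1_def[symmetric] h2_def[symmetric]
      by (simp add: algebra_simps)
    show "(2* of_real lam + of_real \<mu> + 6*k) * ((deriv ^^ 3) h 0 / 6)
      + ((2* of_real lam + of_real \<mu>) * (of_real \<mu> - 1) / 2) * (deriv (deriv h) 0 / 2)^2
      = 2 * of_real t * (w2 0 / 2) + (4 * of_real t ^ 2 - 1) * (w1 0)^2"
    proof -
      have d3: "(deriv ^^ 3) h = h3" by (simp add: h1_def h2_def h3_def numeral_3_eq_3)
      have d2: "deriv (deriv h) = h2" by (simp add: h1_def h2_def)
      show ?thesis unfolding d3 d2 using E2 unfolding VF_def R2 R3
        by (simp add: field_simps power2_eq_square of_real_diff) (drule arg_cong[where f="\<lambda>x. 6*x"], simp add: algebra_simps)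
    qed
  qed
qed


lemma inverse_derivs:
  fixes f g :: "complex \<Rightarrow> complex"
  assumes fhol: "f holomorphic_on unit_disc" and f0: "f 0 = 0" and f10: "deriv f 0 = 1"
    and finj: "inj_on f unit_disc" and ghol: "g holomorphic_on unit_disc"
    and r: "r > 0" and gi: "\<forall>w\<in>ball 0 r. g w \<in> unit_disc \<and> f (g w) = w"
  shows "g 0 = 0" "deriv g 0 = 1" "deriv (deriv g) 0 = - deriv (deriv f) 0"
    "(deriv ^^ 3) g 0 = 3 * (deriv (deriv f) 0)^2 - (deriv ^^ 3) f 0"
proof -
  let ?D = "unit_disc"
  define S where "S = ball (0::complex) (min r 1)"
  have oS: "open S" and z0S: "0 \<in> S" using r by (auto simp: S_def)
  have SD: "w \<in> ?D" if "w \<in> S" for w using that by (auto simp: S_def)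
  have gS: "g w \<in> ?D" and fgS: "f (g w) = w" if "w \<in> S" for w
    using gi that by (auto simp: S_def)
  have o: "open ?D" by simp
  show g0: "g 0 = 0"
    using inj_onD[OF finj, of "g 0" 0] gS[OF z0S] fgS[OF z0S] f0 by simp
  define f1 where "f1 = deriv f"
  define f2 where "f2 = deriv f1"
  define f3 where "f3 = deriv f2"
  define f4 where "f4 = deriv f3"
  define g1 where "g1 = deriv g"
  define g2 where "g2 = deriv g1"
  define g3 where "g3 = deriv g2"
  define g4 where "g4 = deriv g3"
  have hf1: "f1 holomorphic_on ?D" unfolding f1_def by (intro holomorphic_deriv fhol o)
  have hf2: "f2 holomorphic_on ?D" unfolding f2_def by (intro holomorphic_deriv hf1 o)
  have hf3: "f3 holomorphic_on ?D" unfolding f3_def by (intro holomorphic_deriv hf2 o)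
  have hg1: "g1 holomorphic_on ?D" unfolding g1_def by (intro holomorphic_deriv ghol o)
  have hg2: "g2 holomorphic_on ?D" unfolding g2_def by (intro holomorphic_deriv hg1 o)
  have hg3: "g3 holomorphic_on ?D" unfolding g3_def by (intro holomorphic_deriv hg2 o)
  have df: "(f has_field_derivative f1 z) (at z)" if "z \<in> ?D" for z
    unfolding f1_def by (rule holomorphic_derivI[OF fhol o that])
  have df1: "(f1 has_field_derivative f2 z) (at z)" if "z \<in> ?D" for z
    unfolding f2_def by (rule holomorphic_derivI[OF hf1 o that])
  have df2: "(f2 has_field_derivative f3 z) (at z)" if "z \<in> ?D" for z
    unfolding f3_def by (rule holomorphic_derivI[OF hf2 o that])
  have df3: "(f3 has_field_derivative f4 z) (at z)" if "z \<in> ?D" for z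
    unfolding f4_def by (rule holomorphic_derivI[OF hf3 o that])
  have dg: "(g has_field_derivative g1 z) (at z)" if "z \<in> ?D" for z
    unfolding g1_def by (rule holomorphic_derivI[OF ghol o that])
  have dg1: "(g1 has_field_derivative g2 z) (at z)" if "z \<in> ?D" for z
    unfolding g2_def by (rule holomorphic_derivI[OF hg1 o that])
  have dg2: "(g2 has_field_derivative g3 z) (at z)" if "z \<in> ?D" for z
    unfolding g3_def by (rule holomorphic_derivI[OF hg2 o that])
  have c0: "((\<lambda>w. f (g w)) has_field_derivative X) (at w)" if "X = f1 (g w) * g1 w" "w \<in> S" for w X
    unfolding that(1) by (rule DERIV_chain2[OF df[OF gS[OF that(2)]] dg[OF SD[OF that(2)]]])
  have c1: "((\<lambda>w. f1 (g w)) has_field_derivative X) (at w)" if "X = f2 (g w) * g1 w" "w \<in> S" for w X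
    unfolding that(1) by (rule DERIV_chain2[OF df1[OF gS[OF that(2)]] dg[OF SD[OF that(2)]]])
  have c2: "((\<lambda>w. f2 (g w)) has_field_derivative X) (at w)" if "X = f3 (g w) * g1 w" "w \<in> S" for w X
    unfolding that(1) by (rule DERIV_chain2[OF df2[OF gS[OF that(2)]] dg[OF SD[OF that(2)]]])
  have e1: "\<forall>w\<in>S. f1 (g w) * g1 w = 1"
  proof
    fix w assume w: "w \<in> S"
    show "f1 (g w) * g1 w = 1"
      by (rule deriv_unique_on[OF oS w _ c0[OF refl w], of "\<lambda>w. w"]) (auto simp: fgS)
  qed
  define Q2 where "Q2 = (\<lambda>w. f2 (g w) * g1 w * g1 w + f1 (g w) * g2 w)"
  have e2: "\<forall>w\<in>S. Q2 w = 0"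
  proof
    fix w assume w: "w \<in> S"
    have "((\<lambda>w. f1 (g w) * g1 w) has_field_derivative Q2 w) (at w)"
      unfolding Q2_def by (auto intro!: derivative_eq_intros c1 dg1 w SD)
    then show "Q2 w = 0"
      by (rule deriv_unique_on[OF oS w e1 _ DERIV_const])
  qed
  have e3: "f3 (g 0) * g1 0 * g1 0 * g1 0 + f2 (g 0) * g2 0 * g1 0 + f2 (g 0) * g1 0 * g2 0
      + (f2 (g 0) * g1 0 * g2 0 + f1 (g 0) * g3 0) = 0"
  proof -
    have "(Q2 has_field_derivative f3 (g 0) * g1 0 * g1 0 * g1 0 + f2 (g 0) * g2 0 * g1 0 + f2 (g 0) * g1 0 * g2 0
      + (f2 (g 0) * g1 0 * g2 0 + f1 (g 0) * g3 0)) (at 0)"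
      unfolding Q2_def by (auto intro!: derivative_eq_intros c1 c2 dg1 dg2 z0S SD simp: algebra_simps)
    then show ?thesis by (rule deriv_unique_on[OF oS z0S e2 _ DERIV_const])
  qed
  have f1_0: "f1 0 = 1" using f10 by (simp add: f1_def)
  have g1_0: "g1 0 = 1" using e1 z0S g0 f1_0 by auto
  show "deriv g 0 = 1" using g1_0 by (simp add: g1_def)
  have g2_0: "g2 0 = - f2 0" using e2 z0S g0 f1_0 g1_0 unfolding Q2_def by (auto simp: add_eq_0_iff)
  show "deriv (deriv g) 0 = - deriv (deriv f) 0" using g2_0 by (simp add: g1_def g2_def f1_def f2_def)
  have "g3 0 = 3 * (f2 0)^2 - f3 0" using e3 g0 f1_0 g1_0 g2_0
    by (simp add: algebra_simps power2_eq_square)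
  then show "(deriv ^^ 3) g 0 = 3 * (deriv (deriv f) 0)^2 - (deriv ^^ 3) f 0"
    by (simp add: g1_def g2_def g3_def f1_def f2_def f3_def numeral_3_eq_3)
qed


theorem theorem1:
  fixes lam \<mu> \<delta> t :: real and f :: "complex \<Rightarrow> complex"
  assumes "lam \<ge> 1" and "\<mu> \<ge> 0" and "\<delta> \<ge> 0" and "1/2 < t" and "t < 1"
    and "f \<in> B_class \<mu> lam \<delta> t"
  defines "\<xi> \<equiv> (2*lam + \<mu>) / (2*lam + 1)"
  shows "(\<bar>(lam + \<mu> + 2*\<xi>*\<delta>)^2
             - 2 * (2*(lam + \<mu> + 2*\<xi>*\<delta>)^2 - (2*lam + \<mu>)*(\<mu> + 1) - 12*\<xi>*\<delta>) * t^2\<bar> \<noteq> 0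
          \<longrightarrow> norm (taylor_coeff f 2) \<le> 2 * t * sqrt (2 * t) /
              sqrt \<bar>(lam + \<mu> + 2*\<xi>*\<delta>)^2
                - 2 * (2*(lam + \<mu> + 2*\<xi>*\<delta>)^2 - (2*lam + \<mu>)*(\<mu> + 1) - 12*\<xi>*\<delta>) * t^2\<bar>)
         \<and> norm (taylor_coeff f 3) \<le> 4*t^2 / (lam + \<mu> + 2*\<xi>*\<delta>)^2 + 2*t / (2*lam + \<mu> + 6*\<xi>*\<delta>)"
proof -
  note lam = assms(1) and mu = assms(2) and de = assms(3) and t = assms(4,5)
  have bu: "bi_univalent f" and cf: "B_condition lam \<mu> \<delta> t f"
    and cg: "\<And>g. is_bi_inverse f g \<Longrightarrow> B_condition lam \<mu> \<delta> t g"
    using assms(6) unfolding B_class_def by auto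
  obtain g r where fhol: "f holomorphic_on unit_disc" and f0: "f 0 = 0" and f10: "deriv f 0 = 1"
    and finj: "inj_on f unit_disc" and ghol: "g holomorphic_on unit_disc"
    and ginj: "inj_on g unit_disc" and r: "r > 0" and gi: "\<forall>w\<in>ball 0 r. g w \<in> unit_disc \<and> f (g w) = w"
    using bu unfolding bi_univalent_def normalized_analytic_def by blast
  have "is_bi_inverse f g" unfolding is_bi_inverse_def using ghol ginj r gi by blast
  then have cg': "B_condition lam \<mu> \<delta> t g" by (rule cg)
  note inv = inverse_derivs[OF fhol f0 f10 finj ghol r gi]
  define k where "k = complex_of_real ((2*lam + \<mu>) / (2*lam + 1) * \<delta>)"
  define a2 where "a2 = deriv (deriv f) 0 / 2"
  define a3 where "a3 = (deriv ^^ 3) f 0 / 6"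
  obtain c1 c2 where c1: "norm c1 \<le> 1" and c2: "norm c2 \<le> 1"
    and ef1: "(of_real lam + of_real \<mu> + 2*k) * a2 = 2 * of_real t * c1"
    and ef2: "(2 * of_real lam + of_real \<mu> + 6*k) * a3
      + ((2 * of_real lam + of_real \<mu>) * (of_real \<mu> - 1) / 2) * a2^2
      = 2 * of_real t * c2 + (4 * of_real t ^ 2 - 1) * c1^2"
    using key[OF fhol f0 f10 cf t] unfolding k_def a2_def a3_def by blast
  obtain d1 d2 where d1: "norm d1 \<le> 1" and d2: "norm d2 \<le> 1"
    and eg1: "(of_real lam + of_real \<mu> + 2*k) * (- a2) = 2 * of_real t * d1"
    and eg2: "(2 * of_real lam + of_real \<mu> + 6*k) * (2 * a2^2 - a3)
      + ((2 * of_real lam + of_real \<mu>) * (of_real \<mu> - 1) / 2) * a2^2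
      = 2 * of_real t * d2 + (4 * of_real t ^ 2 - 1) * d1^2"
  proof -
    from key[OF ghol inv(1) inv(2) cg' t] obtain d1 d2 where
      "norm d1 \<le> 1" "norm d2 \<le> 1"
      "(of_real lam + of_real \<mu> + 2*k) * (deriv (deriv g) 0 / 2) = 2 * of_real t * d1"
      "(2 * of_real lam + of_real \<mu> + 6*k) * ((deriv ^^ 3) g 0 / 6)
      + ((2 * of_real lam + of_real \<mu>) * (of_real \<mu> - 1) / 2) * (deriv (deriv g) 0 / 2)^2
      = 2 * of_real t * d2 + (4 * of_real t ^ 2 - 1) * d1^2"
      unfolding k_def by blast
    moreover have "deriv (deriv g) 0 / 2 = - a2" using inv(3) by (simp add: a2_def)
    moreover have "(deriv ^^ 3) g 0 / 6 = 2 * a2^2 - a3" using inv(4)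
      by (simp add: a2_def a3_def field_simps power2_eq_square)
    ultimately show ?thesis using that by auto
  qed
  define Ar where "Ar = lam + \<mu> + 2*\<xi>*\<delta>"
  define Br where "Br = 2*lam + \<mu> + 6*\<xi>*\<delta>"
  define Cr where "Cr = (2*lam + \<mu>) * (\<mu> - 1) / 2"
  define E where "E = (lam + \<mu> + 2*\<xi>*\<delta>)^2
             - 2 * (2*(lam + \<mu> + 2*\<xi>*\<delta>)^2 - (2*lam + \<mu>)*(\<mu> + 1) - 12*\<xi>*\<delta>) * t^2"
  have xi: "\<xi> \<ge> 0" unfolding \<xi>_def using lam mu by simp
  have xd: "\<xi> * \<delta> \<ge> 0" using xi de by simp
  have Ar: "Ar > 0" unfolding Ar_def using lam mu xd by simp
  have Br: "Br > 0" unfolding Br_def using lam mu xd by simp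
  have tp: "t > 0" using t by simp
  have kx: "k = of_real (\<xi> * \<delta>)" unfolding k_def \<xi>_def by simp
  have Ae: "of_real lam + of_real \<mu> + 2*k = complex_of_real Ar" unfolding kx Ar_def by simp
  have Be: "2 * of_real lam + of_real \<mu> + 6*k = complex_of_real Br" unfolding kx Br_def by simp
  have Ce: "(2 * of_real lam + of_real \<mu>) * (of_real \<mu> - 1) / 2 = complex_of_real Cr" unfolding Cr_def by simp
  have Ee: "E = Ar^2 + 4*t^2*(Br + Cr - Ar^2)" unfolding E_def Ar_def Br_def Cr_def
    by (simp add: field_simps power2_eq_square)
  define A where "A = complex_of_real Ar"
  define B where "B = complex_of_real Br"
  define C where "C = complex_of_real Cr"
  define T where "T = complex_of_real t"
  have T0: "T \<noteq> 0" using tp by (simp add: T_def)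
  have B0: "B \<noteq> 0" using Br by (simp add: B_def)
  have f1: "A * a2 = 2 * T * c1" using ef1 Ae by (simp add: A_def T_def)
  have g1: "A * (- a2) = 2 * T * d1" using eg1 Ae by (simp add: A_def T_def)
  have f2: "B * a3 + C * a2^2 = 2 * T * c2 + (4 * T^2 - 1) * c1^2" using ef2 Be Ce by (simp add: B_def C_def T_def)
  have g2: "B * (2 * a2^2 - a3) + C * a2^2 = 2 * T * d2 + (4 * T^2 - 1) * d1^2" using eg2 Be Ce by (simp add: B_def C_def T_def)
  have d1c: "d1 = - c1" using f1 g1 T0 by (simp add: algebra_simps) (metis mult_left_cancel add_eq_0_iff mult.commute mult_minus_right no_zero_divisors)
  have sq1: "4 * T^2 * c1^2 = A^2 * a2^2"
    using arg_cong[OF f1, of "\<lambda>x. x^2"] by (simp add: power_mult_distrib)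
  have main: "a2^2 * (A^2 + 4*T^2*(B + C - A^2)) = 4 * T^3 * (c2 + d2)"
    using f2 g2 sq1 d1c by algebra
  have main3: "B * (a3 - a2^2) = T * (c2 - d2)"
    using f2 g2 d1c by algebra
  have tc2: "taylor_coeff f 2 = a2" by (simp add: taylor_coeff_def a2_def numeral_2_eq_2)
  have tc3: "taylor_coeff f 3 = a3" by (simp add: taylor_coeff_def a3_def numeral_3_eq_3)
  have EA: "A^2 + 4*T^2*(B + C - A^2) = complex_of_real E" by (simp add: Ee A_def B_def C_def T_def)
  have n1: "norm a2 ^ 2 * \<bar>E\<bar> = 4 * t^3 * norm (c2 + d2)"
  proof -
    have "norm (a2^2 * complex_of_real E) = norm (4 * T^3 * (c2 + d2))" using main EA by simp
    then show ?thesis using tp by (simp add: norm_mult norm_power T_def)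
  qed
  have cd: "norm (c2 + d2) \<le> 2" "norm (c2 - d2) \<le> 2"
    using norm_triangle_ineq[of c2 d2] norm_triangle_ineq4[of c2 d2] c2 d2 by linarith+
  have part1: "norm a2 \<le> 2 * t * sqrt (2 * t) / sqrt \<bar>E\<bar>" if E0: "\<bar>E\<bar> \<noteq> 0"
  proof -
    have "norm a2 ^ 2 * \<bar>E\<bar> \<le> 8 * t^3" using n1 cd(1) tp by (simp add: mult_left_mono[of _ 2 "4*t^3", simplified])
    then have "sqrt (norm a2 ^ 2 * \<bar>E\<bar>) \<le> sqrt (8 * t^3)" by (rule real_sqrt_le_mono)
    moreover have "sqrt (norm a2 ^ 2 * \<bar>E\<bar>) = norm a2 * sqrt \<bar>E\<bar>" by (simp add: real_sqrt_mult)
    moreover have "sqrt (8 * t^3) = 2 * t * sqrt (2 * t)"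
    proof -
      have "sqrt (8 * t^3) = sqrt ((2*t)^2 * (2*t))"
        by (rule arg_cong[where f=sqrt]) (simp add: power2_eq_square power3_eq_cube)
      also have "\<dots> = sqrt ((2*t)^2) * sqrt (2*t)" by (rule real_sqrt_mult)
      also have "\<dots> = 2 * t * sqrt (2 * t)" using tp by (simp only: real_sqrt_abs)
      finally show ?thesis .
    qed
    ultimately have "norm a2 * sqrt \<bar>E\<bar> \<le> 2 * t * sqrt (2 * t)" by simp
    moreover have "sqrt \<bar>E\<bar> > 0" using E0 by simp
    ultimately show ?thesis by (simp add: le_divide_eq)
  qed
  have na2: "norm a2 \<le> 2 * t / Ar"
  proof -
    have "norm (A * a2) = norm (2 * T * c1)" using f1 by simp
    then have "Ar * norm a2 = 2 * t * norm c1" using Ar tp by (simp add: A_def T_def norm_mult)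
    then have "Ar * norm a2 \<le> 2 * t" using c1 tp by (metis mult_left_mono mult.right_neutral less_imp_le zero_le_mult_iff zero_less_numeral mult_pos_pos)
    then show ?thesis using Ar by (simp add: field_simps)
  qed
  have na2s: "norm a2 ^ 2 \<le> 4 * t^2 / Ar^2"
  proof -
    have "norm a2 ^ 2 \<le> (2 * t / Ar)^2" using na2 by (simp add: power_mono)
    then show ?thesis by (simp add: power_divide power_mult_distrib)
  qed
  have a3e: "a3 = a2^2 + T * (c2 - d2) / B" using main3 B0 by (simp add: field_simps)
  have na3: "norm a3 \<le> norm a2 ^ 2 + t * norm (c2 - d2) / Br"
  proof -
    have "norm a3 \<le> norm (a2^2) + norm (T * (c2 - d2) / B)" unfolding a3e by (rule norm_triangle_ineq)
    then show ?thesis using tp Br by (simp add: norm_mult norm_divide norm_power T_def B_def)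
  qed
  have "t * norm (c2 - d2) / Br \<le> 2 * t / Br"
    using cd(2) tp Br by (simp add: divide_right_mono)
  then have part2: "norm a3 \<le> 4*t^2 / Ar^2 + 2*t / Br" using na3 na2s by linarith
  show ?thesis using part1 part2 unfolding tc2 tc3 E_def Ar_def Br_def by blast
qed

end
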